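(* Let $L\in K[D]$ with $\operatorname{Sym}_L=S_1\cdots S_k$ (homogeneous $S_i$), and let $b_1,\dots,b_k\in K$ with $b_1\cdots b_k=1$, so that also $\operatorname{Sym}_L=(b_1S_1)\cdots(b_kS_k)$. Then the rings of obstacles for the two types coincide: $$K[X]/(\operatorname{Sym}_L/S_1,\dots,\operatorname{Sym}_L/S_k)=K[X]/(\operatorname{Sym}_L/(b_1S_1),\dots,\operatorname{Sym}_L/(b_kS_k)).$$ Moreover, the obstacles coincide: the set of classes in this ring of the symbols of common obstacles to factorization of $L$ of type $(S_1)\cdots(S_k)$ equals the set of classes of the symbols of common obstacles to factorization of $L$ of type $(b_1S_1)\cdots(b_kS_k)$.
   Context: $K$ is a field with commuting derivations $\partial_1,\dots,\partial_n$, and $K[D]=K[D_1,\dots,D_n]$ is the ring of linear differential operators over $K$: the $D_i$ commute with each other and $D_i\circ a=aD_i+\partial_i(a)$ for $a\in K$. Every $L\in K[D]$ is uniquely $\sum_{|J|\le d}a_JD^J$ with $a_J\in K$ and $D^J=D_1^{j_1}\cdots D_n^{j_n}$. The order $\operatorname{ord}(L)$ is the largest $|J|$ with $a_J\ne0$, and $\operatorname{ord}(0)=-\infty$. The symbol $\operatorname{Sym}_L=\sum_{|J|=\operatorname{ord}L}a_JX^J\in K[X]=K[X_1,\dots,X_n]$, with $\operatorname{Sym}_0=0$. A factorization of type $(T_1)\cdots(T_k)$ of an operator $M$ is $M=F_1\circ\cdots\circ F_k$ with $\operatorname{Sym}_{F_i}=T_i$. A common obstacle to factorization of $L$ of type $(T_1)\cdots(T_k)$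 is an operator $R$ such that $L-R$ has a factorization of that type and $R$ has minimal possible order among such operators. The ring of obstacles for type $(T_1)\cdots(T_k)$, where $\operatorname{Sym}_L=T_1\cdots T_k$, is $K[X]/(\operatorname{Sym}_L/T_1,\dots,\operatorname{Sym}_L/T_k)$. The obstacle is the class in this ring of the symbols of common obstacles (these all lie in one class when the $T_i$ are pairwise coprime). *)

theory Defs
  imports Main "HOL-Library.Poly_Mapping"
begin

text \<open>
  K is a field type 'a with n commuting derivations \<partial> 0, ..., \<partial> (n-1)
  (the paper's \<partial>_1..\<partial>_n).  Both K[X] = K[X_1..X_n] and
  K[D] = K[D_1..D_n] are represented by finitely supported coefficient maps
  maps from multi-indices to 'a whose monomials only involve the first n variables.
  On K[X] we use the library multiplication (commutative polynomial product);
  on K[D] the composition is op_comp below (Leibniz rule).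
\<close>

type_synonym mindex = "nat \<Rightarrow>\<^sub>0 nat"
type_synonym 'a mpoly = "mindex \<Rightarrow>\<^sub>0 'a"

definition derivations :: "nat \<Rightarrow> (nat \<Rightarrow> 'a::field \<Rightarrow> 'a) \<Rightarrow> bool" where
  "derivations n d \<longleftrightarrow>
     (\<forall>i<n. \<forall>a b. d i (a + b) = d i a + d i b) \<and>
     (\<forall>i<n. \<forall>a b. d i (a * b) = a * d i b + d i a * b) \<and>
     (\<forall>i<n. \<forall>j<n. \<forall>a. d i (d j a) = d j (d i a))"

definition in_vars :: "nat \<Rightarrow> 'a::zero mpoly \<Rightarrow> bool" where
  "in_vars n p \<longleftrightarrow> (\<forall>J\<in>Poly_Mapping.keys p. Poly_Mapping.keys J \<subseteq> {..<n})"

definition mdeg :: "mindex \<Rightarrow> nat" where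
  "mdeg J = (\<Sum>i\<in>Poly_Mapping.keys J. Poly_Mapping.lookup J i)"

definition mle :: "mindex \<Rightarrow> mindex \<Rightarrow> bool" where
  "mle I J \<longleftrightarrow> (\<forall>i. Poly_Mapping.lookup I i \<le> Poly_Mapping.lookup J i)"

definition mbinom :: "mindex \<Rightarrow> mindex \<Rightarrow> nat" where
  "mbinom J I = (\<Prod>i\<in>Poly_Mapping.keys J. Poly_Mapping.lookup J i choose Poly_Mapping.lookup I i)"

definition dpow :: "nat \<Rightarrow> (nat \<Rightarrow> 'a \<Rightarrow> 'a) \<Rightarrow> mindex \<Rightarrow> 'a \<Rightarrow> 'a" where
  "dpow n d J b = foldr (\<lambda>i x. (d i ^^ Poly_Mapping.lookup J i) x) [0..<n] b"

text \<open>Composition in K[D]: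
  (\<Sum> a_J D^J) \<circ> (\<Sum> b_M D^M) = \<Sum>_{J,M} \<Sum>_{I \<le> J} a_J binom(J,I) \<partial>^{J-I}(b_M) D^{I+M},
  i.e. the multiplication determined by D_i D_j = D_j D_i and
  D_i \<circ> a = a D_i + \<partial>_i(a).\<close>
definition op_comp :: "nat \<Rightarrow> (nat \<Rightarrow> 'a::field \<Rightarrow> 'a) \<Rightarrow> 'a mpoly \<Rightarrow> 'a mpoly \<Rightarrow> 'a mpoly" where
  "op_comp n d A B =
     (\<Sum>J\<in>Poly_Mapping.keys A. \<Sum>M\<in>Poly_Mapping.keys B. \<Sum>I\<in>{I. mle I J}.
        Poly_Mapping.single (I + M)
          (Poly_Mapping.lookup A J * of_nat (mbinom J I) * dpow n d (J - I) (Poly_Mapping.lookup B M)))"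

definition op_comp_list :: "nat \<Rightarrow> (nat \<Rightarrow> 'a::field \<Rightarrow> 'a) \<Rightarrow> 'a mpoly list \<Rightarrow> 'a mpoly" where
  "op_comp_list n d Fs = foldr (op_comp n d) Fs 1"

text \<open>Order of an operator.  ord 0 = -\<infinity> is encoded as -1 (only comparisons
  between orders are used, and -1 is below every genuine order).\<close>
definition ord :: "'a::zero mpoly \<Rightarrow> int" where
  "ord L = (if L = 0 then -1 else int (Max (mdeg ` Poly_Mapping.keys L)))"

text \<open>Symbol: the top-order homogeneous part, read as an element of K[X].\<close>
definition Sym :: "'a::comm_monoid_add mpoly \<Rightarrow> 'a mpoly" where
  "Sym L = (\<Sum>J\<in>{J\<in>Poly_Mapping.keys L. int (mdeg J) = ord L}. Poly_Mapping.single J (Poly_Mapping.lookup L J))"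

definition homogeneous :: "'a::zero mpoly \<Rightarrow> bool" where
  "homogeneous p \<longleftrightarrow> (\<forall>I\<in>Poly_Mapping.keys p. \<forall>J\<in>Poly_Mapping.keys p. mdeg I = mdeg J)"

definition scal :: "'a::field \<Rightarrow> 'a mpoly \<Rightarrow> 'a mpoly" where
  "scal c T = Poly_Mapping.single 0 c * T"

definition poly_ideal :: "nat \<Rightarrow> 'a::field mpoly list \<Rightarrow> 'a mpoly set" where
  "poly_ideal n Gs = {(\<Sum>i<length Gs. C i * Gs ! i) | C. \<forall>i<length Gs. in_vars n (C i)}"

text \<open>Sym_L / T_i for Sym_L = T_1 ... T_k, i.e. the product of the other factors.\<close>
definition cofactors :: "'a::field mpoly list \<Rightarrow> 'a mpoly list" where
  "cofactors Ts = map (\<lambda>i. \<Prod>j\<in>{..<length Ts} - {i}. Ts ! j) [0..<length Ts]"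

text \<open>Ring of obstacles K[X]/(Sym_L/T_1, ..., Sym_L/T_k), given by its ideal.\<close>
definition obstacle_ideal :: "nat \<Rightarrow> 'a::field mpoly list \<Rightarrow> 'a mpoly set" where
  "obstacle_ideal n Ts = poly_ideal n (cofactors Ts)"

definition cls :: "'a::field mpoly set \<Rightarrow> 'a mpoly \<Rightarrow> 'a mpoly set" where
  "cls I p = {p + q | q. q \<in> I}"

definition has_factorization ::
  "nat \<Rightarrow> (nat \<Rightarrow> 'a::field \<Rightarrow> 'a) \<Rightarrow> 'a mpoly \<Rightarrow> 'a mpoly list \<Rightarrow> bool" where
  "has_factorization n d M Ts \<longleftrightarrow>
     (\<exists>Fs. length Fs = length Ts \<and>
        (\<forall>i<length Ts. in_vars n (Fs ! i) \<and> Sym (Fs ! i) = Ts ! i) \<and>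
        M = op_comp_list n d Fs)"

definition common_obstacle ::
  "nat \<Rightarrow> (nat \<Rightarrow> 'a::field \<Rightarrow> 'a) \<Rightarrow> 'a mpoly \<Rightarrow> 'a mpoly list \<Rightarrow> 'a mpoly \<Rightarrow> bool" where
  "common_obstacle n d L Ts R \<longleftrightarrow>
     in_vars n R \<and> has_factorization n d (L - R) Ts \<and>
     (\<forall>R'. in_vars n R' \<and> has_factorization n d (L - R') Ts \<longrightarrow> ord R \<le> ord R')"

definition obstacle_classes ::
  "nat \<Rightarrow> (nat \<Rightarrow> 'a::field \<Rightarrow> 'a) \<Rightarrow> 'a mpoly \<Rightarrow> 'a mpoly list \<Rightarrow> 'a mpoly set set" where
  "obstacle_classes n d L Ts =
     (\<lambda>R. cls (obstacle_ideal n Ts) (Sym R)) ` {R. common_obstacle n d L Ts R}"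

end

theory Submission
  imports Defs "HOL-Library.FuncSet"
begin
lemma lookup_scal[simp]: "Poly_Mapping.lookup (scal c T) P = c * Poly_Mapping.lookup T P"
  unfolding scal_def mult_map_scale_conv_mult[symmetric]
  by (simp add: map.rep_eq when_def)

lemma scal_scal[simp]: "scal a (scal b T) = scal (a*b) T"
  by (rule poly_mapping_eqI) simp

lemma scal_one[simp]: "scal 1 T = T"
  by (rule poly_mapping_eqI) simp

lemma keys_scal: "(c::'a::field) \<noteq> 0 \<Longrightarrow> Poly_Mapping.keys (scal c T) = Poly_Mapping.keys T"
  by (auto simp: in_keys_iff)

lemma keys_scal_sub: "Poly_Mapping.keys (scal (c::'a::field) T) \<subseteq> Poly_Mapping.keys T"
  by (auto simp: in_keys_iff)

lemma in_vars_scal: "in_vars n T \<Longrightarrow> in_vars n (scal (c::'a::field) T)"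
  using keys_scal_sub unfolding in_vars_def by blast

lemma scal_mult: "scal a X * scal b Y = scal (a*b) (X*Y)"
  unfolding scal_def by (simp add: algebra_simps mult_single)

lemma scal_mult_left: "scal a X * Y = scal a (X*Y)"
  unfolding scal_def by (simp add: algebra_simps)

lemma scal_add: "scal a (X + Y) = scal a X + scal a Y"
  unfolding scal_def by (simp add: algebra_simps)

lemma scal_zero[simp]: "scal a 0 = 0"
  unfolding scal_def by simp

lemma scal_sum: "scal a (sum f A) = (\<Sum>x\<in>A. scal a (f x))"
  unfolding scal_def by (simp add: sum_distrib_left)

lemma prod_scal: "(\<Prod>j\<in>A. scal (b j) (S j)) = scal (\<Prod>j\<in>A. b j) (\<Prod>j\<in>A. S j)"
proof (induction A rule: infinite_finite_induct)
  case (infinite A) then show ?case by (simp add: scal_def)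
next
  case empty then show ?case by (simp add: scal_def)
next
  case (insert x F) then show ?case by (simp add: scal_mult)
qed

lemma in_vars_mult_scal: "in_vars n C \<Longrightarrow> in_vars n (C * Poly_Mapping.single 0 (c::'a::field))"
  using in_vars_scal[of n C c] by (simp add: scal_def mult.commute)


lemma mult_scal_swap: "C * scal e G = scal e C * G"
  unfolding scal_def by (simp add: algebra_simps)

lemma poly_ideal_scale:
  assumes len: "length Hs = length Gs"
    and h: "\<forall>i<length Gs. Hs!i = scal (e i) (Gs!i) \<and> e i \<noteq> (0::'a::field)"
  shows "poly_ideal n Hs = poly_ideal n Gs"
proof
  show "poly_ideal n Hs \<subseteq> poly_ideal n Gs"
  proof
    fix x assume "x \<in> poly_ideal n Hs"
    then obtain C where x: "x = (\<Sum>i<length Hs. C i * Hs ! i)" and C: "\<forall>i<length Hs. in_vars n (C i)"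
      unfolding poly_ideal_def by blast
    have "x = (\<Sum>i<length Gs. scal (e i) (C i) * Gs ! i)"
      unfolding x len by (rule sum.cong) (auto simp: h mult_scal_swap)
    moreover have "\<forall>i<length Gs. in_vars n (scal (e i) (C i))" using C len in_vars_scal by auto
    ultimately show "x \<in> poly_ideal n Gs" unfolding poly_ideal_def mem_Collect_eq
      by (intro exI[of _ "\<lambda>i. scal (e i) (C i)"]) auto
  qed
next
  show "poly_ideal n Gs \<subseteq> poly_ideal n Hs"
  proof
    fix x assume "x \<in> poly_ideal n Gs"
    then obtain C where x: "x = (\<Sum>i<length Gs. C i * Gs ! i)" and C: "\<forall>i<length Gs. in_vars n (C i)"
      unfolding poly_ideal_def by blast
    have "x = (\<Sum>i<length Hs. scal (inverse (e i)) (C i) * Hs ! i)"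
      unfolding x len by (rule sum.cong) (auto simp: h mult_scal_swap)
    moreover have "\<forall>i<length Hs. in_vars n (scal (inverse (e i)) (C i))" using C len in_vars_scal by auto
    ultimately show "x \<in> poly_ideal n Hs" unfolding poly_ideal_def mem_Collect_eq
      by (intro exI[of _ "\<lambda>i. scal (inverse (e i)) (C i)"]) auto
  qed
qed

lemma prod_list_nonzero: "prod_list (b::'a::field list) = 1 \<Longrightarrow> x \<in> set b \<Longrightarrow> x \<noteq> 0"
  by (metis prod_list_zero_iff zero_neq_one)

lemma obstacle_ideal_scale:
  assumes "length b = length S" and "prod_list b = (1::'a::field)"
  shows "obstacle_ideal n S = obstacle_ideal n (map2 scal b S)"
proof -
  have nz: "\<forall>j<length S. b!j \<noteq> 0" using assms prod_list_nonzero nth_mem by metis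
  have "poly_ideal n (cofactors (map2 scal b S)) = poly_ideal n (cofactors S)"
  proof (rule poly_ideal_scale[where e = "\<lambda>i. \<Prod>j\<in>{..<length S} - {i}. b!j"])
    show "length (cofactors (map2 scal b S)) = length (cofactors S)"
      using assms by (simp add: cofactors_def)
    show "\<forall>i<length (cofactors S). cofactors (map2 scal b S) ! i = scal (\<Prod>j\<in>{..<length S} - {i}. b ! j) (cofactors S ! i) \<and>
        (\<Prod>j\<in>{..<length S} - {i}. b ! j) \<noteq> 0"
    proof (intro allI impI conjI)
      fix i assume i: "i < length (cofactors S)"
      then have i': "i < length S" by (simp add: cofactors_def)
      have "cofactors (map2 scal b S) ! i = (\<Prod>j\<in>{..<length S} - {i}. scal (b!j) (S!j))"
        using i' assms(1) by (simp add: cofactors_def)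
      also have "\<dots> = scal (\<Prod>j\<in>{..<length S} - {i}. b ! j) (cofactors S ! i)"
        using i' by (simp add: prod_scal cofactors_def)
      finally show "cofactors (map2 scal b S) ! i = scal (\<Prod>j\<in>{..<length S} - {i}. b ! j) (cofactors S ! i)" .
      show "(\<Prod>j\<in>{..<length S} - {i}. b ! j) \<noteq> 0" using nz by (simp add: prod_zero_iff)
    qed
  qed
  then show ?thesis unfolding obstacle_ideal_def by simp
qed


section \<open>Additive maps and iterated derivations\<close>

definition addf :: "('a::field \<Rightarrow> 'a) \<Rightarrow> bool" where
  "addf f \<longleftrightarrow> (\<forall>a b. f (a + b) = f a + f b)"

lemma addf_zero: "addf f \<Longrightarrow> f 0 = 0"
  unfolding addf_def by (metis add_cancel_right_right add_0)

lemma addf_sum: "addf f \<Longrightarrow> f (sum g A) = (\<Sum>x\<in>A. f (g x))"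
  by (induction A rule: infinite_finite_induct) (auto simp: addf_zero addf_def)

lemma addf_of_nat: "addf f \<Longrightarrow> f (of_nat k * a) = of_nat k * f a"
  by (induction k) (auto simp: addf_zero addf_def algebra_simps)

lemma addf_funpow: "addf f \<Longrightarrow> addf (f ^^ m)"
  by (induction m) (auto simp: addf_def)

lemma addf_comp: "addf f \<Longrightarrow> addf g \<Longrightarrow> addf (f \<circ> g)"
  by (auto simp: addf_def)

lemma addf_d: "derivations n d \<Longrightarrow> i < n \<Longrightarrow> addf (d i)"
  unfolding derivations_def addf_def by blast

definition Dl :: "(nat \<Rightarrow> 'a \<Rightarrow> 'a) \<Rightarrow> nat list \<Rightarrow> mindex \<Rightarrow> 'a \<Rightarrow> 'a" where
  "Dl d xs K b = foldr (\<lambda>i x. (d i ^^ Poly_Mapping.lookup K i) x) xs b"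

lemma Dl_Nil[simp]: "Dl d [] K b = b" by (simp add: Dl_def)
lemma Dl_Cons: "Dl d (x#xs) K b = (d x ^^ Poly_Mapping.lookup K x) (Dl d xs K b)" by (simp add: Dl_def)

lemma dpow_Dl: "dpow n d K b = Dl d [0..<n] K b" by (simp add: dpow_def Dl_def)

lemma Dl_cong: "(\<forall>i\<in>set xs. Poly_Mapping.lookup K i = Poly_Mapping.lookup K' i) \<Longrightarrow> Dl d xs K b = Dl d xs K' b"
  by (induction xs) (auto simp: Dl_Cons)

lemma addf_Dl: "derivations n d \<Longrightarrow> set xs \<subseteq> {..<n} \<Longrightarrow> addf (Dl d xs K)"
proof (induction xs)
  case Nil then show ?case by (simp add: addf_def)
next
  case (Cons x xs)
  have "addf (d x)" using Cons addf_d by auto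
  have "addf ((d x ^^ Poly_Mapping.lookup K x) \<circ> Dl d xs K)"
    using Cons by (intro addf_comp addf_funpow \<open>addf (d x)\<close>) auto
  then show ?case by (simp add: Dl_Cons o_def[abs_def] addf_def)
qed

lemma addf_dpow: "derivations n d \<Longrightarrow> addf (dpow n d K)"
proof -
  assume a: "derivations n d"
  have e: "dpow n d K = Dl d [0..<n] K" by (rule ext) (simp add: dpow_Dl)
  show ?thesis unfolding e by (rule addf_Dl[OF a]) auto
qed

lemma dpow_zero_mindex: "dpow n d 0 b = b"
  unfolding dpow_Dl by (induction n) (auto simp: Dl_def)

lemma leibniz1:
  assumes "derivations n d" "i < n"
  shows "(d i ^^ m) (u * v) = (\<Sum>a\<le>m. of_nat (m choose a) * (d i ^^ (m - a)) u * (d i ^^ a) v)"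
proof (induction m)
  case 0 then show ?case by simp
next
  case (Suc m)
  define U where "U k = (d i ^^ k) u" for k
  define V where "V k = (d i ^^ k) v" for k
  have ad: "addf (d i)" using assms by (rule addf_d)
  have dm: "d i (x * y) = x * d i y + d i x * y" for x y
    using assms unfolding derivations_def by blast
  have dU: "d i (U k) = U (Suc k)" for k by (simp add: U_def)
  have dV: "d i (V k) = V (Suc k)" for k by (simp add: V_def)
  have "(d i ^^ Suc m) (u * v) = d i (\<Sum>a\<le>m. of_nat (m choose a) * U (m - a) * V a)"
    using Suc by (simp add: U_def V_def)
  also have "\<dots> = (\<Sum>a\<le>m. of_nat (m choose a) * d i (U (m - a) * V a))"
    by (simp add: addf_sum[OF ad] mult.assoc addf_of_nat[OF ad])
  also have "\<dots> = (\<Sum>a\<le>m. of_nat (m choose a) * U (Suc (m - a)) * V a)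
      + (\<Sum>a\<le>m. of_nat (m choose a) * U (m - a) * V (Suc a))"
    by (simp add: dm dU dV algebra_simps sum.distrib)
  also have "(\<Sum>a\<le>m. of_nat (m choose a) * U (Suc (m - a)) * V a)
      = U (Suc m) * V 0 + (\<Sum>a\<le>m. of_nat (m choose Suc a) * U (m - a) * V (Suc a))"
  proof -
    have "(\<Sum>a\<le>m. of_nat (m choose a) * U (Suc (m - a)) * V a)
        = (\<Sum>a\<le>Suc m. of_nat (m choose a) * U (Suc m - a) * V a)"
      by (simp add: Suc_diff_le binomial_eq_0)
    also have "\<dots> = U (Suc m) * V 0 + (\<Sum>a\<le>m. of_nat (m choose Suc a) * U (m - a) * V (Suc a))"
      by (subst sum.atMost_Suc_shift) simp
    finally show ?thesis .
  qed
  also have "U (Suc m) * V 0 + (\<Sum>a\<le>m. of_nat (m choose Suc a) * U (m - a) * V (Suc a))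
      + (\<Sum>a\<le>m. of_nat (m choose a) * U (m - a) * V (Suc a))
      = (\<Sum>a\<le>Suc m. of_nat (Suc m choose a) * U (Suc m - a) * V a)"
  proof -
    have "(\<Sum>a\<le>Suc m. of_nat (Suc m choose a) * U (Suc m - a) * V a)
       = U (Suc m) * V 0 + (\<Sum>a\<le>m. of_nat (Suc m choose Suc a) * U (m - a) * V (Suc a))"
      by (subst sum.atMost_Suc_shift) simp
    then show ?thesis by (simp add: sum.distrib algebra_simps)
  qed
  finally show ?case by (simp add: U_def V_def)
qed


section \<open>Boxes of multi-indices\<close>

abbreviation lk :: "('x \<Rightarrow>\<^sub>0 'y::zero) \<Rightarrow> 'x \<Rightarrow> 'y" where "lk \<equiv> Poly_Mapping.lookup"

definition box :: "mindex \<Rightarrow> mindex set" where "box J = {I. mle I J}"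

lemma mem_box: "I \<in> box J \<longleftrightarrow> (\<forall>i. lk I i \<le> lk J i)"
  by (simp add: box_def mle_def)

lemma box_keys: "I \<in> box J \<Longrightarrow> Poly_Mapping.keys I \<subseteq> Poly_Mapping.keys J"
  by (auto simp: mem_box in_keys_iff) (meson less_le_trans)

lemma finite_box: "finite (box J)"
proof -
  let ?g = "\<lambda>(A::mindex) i. if i \<in> Poly_Mapping.keys J then lk A i else undefined"
  have "inj_on ?g (box J)"
  proof (rule inj_onI)
    fix A B assume A: "A \<in> box J" and B: "B \<in> box J" and e: "?g A = ?g B"
    show "A = B"
    proof (rule poly_mapping_eqI)
      fix i show "lk A i = lk B i"
      proof (cases "i \<in> Poly_Mapping.keys J")
        case True
        from e have "(if i \<in> Poly_Mapping.keys J then lk A i else undefined) = (if i \<in> Poly_Mapping.keys J then lk B i else undefined)" by (rule fun_cong)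
        with True show ?thesis by simp
      next
        case False then show ?thesis using A B by (auto simp: mem_box in_keys_iff) (metis le_zero_eq)
      qed
    qed
  qed
  moreover have "?g ` box J \<subseteq> PiE (Poly_Mapping.keys J) (\<lambda>i. {..lk J i})"
    by (auto simp: mem_box PiE_iff)
  moreover have "finite (PiE (Poly_Mapping.keys J) (\<lambda>i. {..lk J i}))"
    by (rule finite_PiE) auto
  ultimately show ?thesis by (meson finite_imageD finite_subset)
qed

lemma box_zero: "box 0 = {0}"
  by (auto simp: mem_box intro: poly_mapping_eqI)

lemma self_in_box[simp]: "J \<in> box J" by (simp add: mem_box)

lemma mdeg_superset: "finite S \<Longrightarrow> Poly_Mapping.keys J \<subseteq> S \<Longrightarrow> mdeg J = (\<Sum>i\<in>S. lk J i)"
  unfolding mdeg_def by (rule sum.mono_neutral_left) (auto simp: in_keys_iff)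

lemma mbinom_superset:
  assumes S: "finite S" "Poly_Mapping.keys J \<subseteq> S" and I: "I \<in> box J"
  shows "mbinom J I = (\<Prod>i\<in>S. lk J i choose lk I i)"
  unfolding mbinom_def
proof (rule prod.mono_neutral_left[OF S])
  show "\<forall>i\<in>S - Poly_Mapping.keys J. lk J i choose lk I i = 1"
  proof
    fix i assume "i \<in> S - Poly_Mapping.keys J"
    then have "lk J i = 0" by (simp add: in_keys_iff)
    moreover then have "lk I i = 0" using I by (metis mem_box le_zero_eq)
    ultimately show "lk J i choose lk I i = 1" by simp
  qed
qed

lemma mbinom_self[simp]: "mbinom J J = 1"
  by (simp add: mbinom_def)

lemma mdeg_mono: assumes I: "I \<in> box J" shows "mdeg I \<le> mdeg J"
proof -
  have "mdeg I = (\<Sum>i\<in>Poly_Mapping.keys J. lk I i)"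
    by (rule mdeg_superset) (use box_keys[OF I] in auto)
  also have "\<dots> \<le> (\<Sum>i\<in>Poly_Mapping.keys J. lk J i)"
    using I by (intro sum_mono) (simp add: mem_box)
  finally show ?thesis by (simp add: mdeg_def)
qed

lemma mdeg_eq_box: "I \<in> box J \<Longrightarrow> mdeg I = mdeg J \<Longrightarrow> I = J"
proof (rule poly_mapping_eqI)
  fix i assume I: "I \<in> box J" and e: "mdeg I = mdeg J"
  have "mdeg I = (\<Sum>i\<in>Poly_Mapping.keys J. lk I i)"
    by (rule mdeg_superset) (use box_keys[OF I] in auto)
  then have s: "(\<Sum>i\<in>Poly_Mapping.keys J. lk I i) = (\<Sum>i\<in>Poly_Mapping.keys J. lk J i)"
    using e by (simp add: mdeg_def)
  show "lk I i = lk J i"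
  proof (cases "i \<in> Poly_Mapping.keys J")
    case True
    show ?thesis by (rule sum_mono_inv[OF s]) (use I True in \<open>auto simp: mem_box\<close>)
  next
    case False then show ?thesis using I by (auto simp: mem_box in_keys_iff) (metis le_zero_eq)
  qed
qed

lemma box_split:
  fixes F :: "mindex \<Rightarrow> 'b::comm_monoid_add"
  assumes K: "K = K' + Poly_Mapping.single x m" and K'x: "lk K' x = 0"
  shows "(\<Sum>A\<in>box K. F A) = (\<Sum>A'\<in>box K'. \<Sum>a\<le>m. F (A' + Poly_Mapping.single x a))"
proof -
  have "(\<Sum>A'\<in>box K'. \<Sum>a\<le>m. F (A' + Poly_Mapping.single x a))
      = (\<Sum>p\<in>box K' \<times> {..m}. F (fst p + Poly_Mapping.single x (snd p)))"
    by (simp add: sum.cartesian_product finite_box split_beta)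
  also have "\<dots> = (\<Sum>A\<in>box K. F A)"
  proof (rule sum.reindex_bij_witness[where i = "\<lambda>A. (A - Poly_Mapping.single x (lk A x), lk A x)"
        and j = "\<lambda>p. fst p + Poly_Mapping.single x (snd p)"])
    fix A assume A: "A \<in> box K"
    show "fst (A - Poly_Mapping.single x (lk A x), lk A x) + Poly_Mapping.single x (snd (A - Poly_Mapping.single x (lk A x), lk A x)) = A"
      by (rule poly_mapping_eqI) (auto simp: lookup_add lookup_minus lookup_single when_def)
    have "\<forall>i. lk A i \<le> lk K i" using A by (simp add: mem_box)
    then show "(A - Poly_Mapping.single x (lk A x), lk A x) \<in> box K' \<times> {..m}"
      using K'x by (auto simp: mem_box K lookup_add lookup_minus lookup_single when_def split: if_splits)
  next
    fix p assume p: "p \<in> box K' \<times> {..m}"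
    then have a: "\<forall>i. lk (fst p) i \<le> lk K' i" "snd p \<le> m" by (auto simp: mem_box)
    then have px: "lk (fst p) x = 0" using K'x by (metis le_zero_eq)
    show "fst p + Poly_Mapping.single x (snd p) \<in> box K"
      using a by (auto simp: mem_box K lookup_add lookup_single when_def add_mono)
    show "(fst p + Poly_Mapping.single x (snd p) - Poly_Mapping.single x (lk (fst p + Poly_Mapping.single x (snd p)) x),
          lk (fst p + Poly_Mapping.single x (snd p)) x) = p"
      using px by (auto simp: lookup_add lookup_single intro!: poly_mapping_eqI simp: lookup_minus)
  qed simp
  finally show ?thesis ..
qed


section \<open>Multi-index Leibniz rule\<close>

lemma leibniz_list:
  assumes der: "derivations n d" and "set xs \<subseteq> {..<n}" "distinct xs" "Poly_Mapping.keys K \<subseteq> set xs"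
  shows "Dl d xs K (u * v) = (\<Sum>A\<in>box K. of_nat (\<Prod>i\<in>set xs. lk K i choose lk A i) * Dl d xs (K - A) u * Dl d xs A v)"
  using assms(2-4)
proof (induction xs arbitrary: K)
  case Nil
  then have "K = 0" by simp
  then show ?case by (simp add: box_zero)
next
  case (Cons x xs)
  define m where "m = lk K x"
  define K' where "K' = K - Poly_Mapping.single x m"
  have xn: "x < n" and xs: "set xs \<subseteq> {..<n}" and xnot: "x \<notin> set xs" and dist: "distinct xs"
    using Cons.prems by auto
  have hK: "K = K' + Poly_Mapping.single x m"
    by (rule poly_mapping_eqI) (simp add: K'_def m_def lookup_add lookup_minus lookup_single when_def)
  have K'x: "lk K' x = 0" by (simp add: K'_def m_def lookup_minus)
  have K'i: "lk K' i = lk K i" if "i \<noteq> x" for i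
    using that by (simp add: K'_def lookup_minus lookup_single when_def)
  have kK': "Poly_Mapping.keys K' \<subseteq> set xs"
  proof
    fix i assume i: "i \<in> Poly_Mapping.keys K'"
    then have "i \<noteq> x" using K'x by (auto simp: in_keys_iff)
    moreover then have "i \<in> Poly_Mapping.keys K" using i K'i by (simp add: in_keys_iff)
    ultimately show "i \<in> set xs" using Cons.prems(3) by auto
  qed
  note IH = Cons.IH[OF xs dist kK']
  have adx: "addf (d x ^^ m)" by (rule addf_funpow[OF addf_d[OF der xn]])
  define c where "c A' = (\<Prod>i\<in>set xs. lk K' i choose lk A' i)" for A'
  define U where "U A' = Dl d xs (K' - A') u" for A'
  define V where "V A' = Dl d xs A' v" for A'
  define G where "G A = of_nat (\<Prod>i\<in>set (x#xs). lk K i choose lk A i) * Dl d (x#xs) (K - A) u * Dl d (x#xs) A v" for A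
  have "Dl d (x#xs) K (u * v) = (d x ^^ m) (Dl d xs K' (u * v))"
    unfolding Dl_Cons m_def using xnot K'i by (metis Dl_cong)
  also have "\<dots> = (d x ^^ m) (\<Sum>A'\<in>box K'. of_nat (c A') * (U A' * V A'))"
    unfolding IH c_def U_def V_def by (simp add: mult.assoc)
  also have "\<dots> = (\<Sum>A'\<in>box K'. of_nat (c A') * (d x ^^ m) (U A' * V A'))"
    by (simp add: addf_sum[OF adx] addf_of_nat[OF adx])
  also have "\<dots> = (\<Sum>A'\<in>box K'. \<Sum>a\<le>m. G (A' + Poly_Mapping.single x a))"
  proof (rule sum.cong[OF refl])
    fix A' assume A': "A' \<in> box K'"
    have A'x: "lk A' x = 0" using A' K'x by (metis mem_box le_zero_eq)
    have "of_nat (c A') * (d x ^^ m) (U A' * V A')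
        = (\<Sum>a\<le>m. of_nat (c A') * (of_nat (m choose a) * (d x ^^ (m - a)) (U A') * (d x ^^ a) (V A')))"
      by (simp add: leibniz1[OF der xn] sum_distrib_left)
    also have "\<dots> = (\<Sum>a\<le>m. G (A' + Poly_Mapping.single x a))"
    proof (rule sum.cong[OF refl])
      fix a assume a: "a \<in> {..m}"
      define A where "A = A' + Poly_Mapping.single x a"
      have Ax: "lk A x = a" using A'x by (simp add: A_def lookup_add)
      have Ai: "lk A i = lk A' i" if "i \<noteq> x" for i using that by (simp add: A_def lookup_add lookup_single when_def)
      have p: "(\<Prod>i\<in>set (x#xs). lk K i choose lk A i) = (m choose a) * c A'"
      proof -
        have "(\<Prod>i\<in>set (x#xs). lk K i choose lk A i) = (lk K x choose lk A x) * (\<Prod>i\<in>set xs. lk K i choose lk A i)"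
          using xnot by simp
        also have "(\<Prod>i\<in>set xs. lk K i choose lk A i) = c A'"
          unfolding c_def
        proof (rule prod.cong[OF refl])
          fix i assume "i \<in> set xs"
          then have "i \<noteq> x" using xnot by auto
          then show "lk K i choose lk A i = lk K' i choose lk A' i" by (simp add: K'i Ai)
        qed
        finally show ?thesis by (simp add: Ax m_def)
      qed
      have e1: "Dl d (x#xs) (K - A) u = (d x ^^ (m - a)) (U A')"
        unfolding Dl_Cons U_def
      proof -
        have "Dl d xs (K - A) u = Dl d xs (K' - A') u"
        proof (rule Dl_cong, intro ballI)
          fix i assume "i \<in> set xs"
          then have "i \<noteq> x" using xnot by auto
          then show "lk (K - A) i = lk (K' - A') i" by (simp add: lookup_minus K'i Ai)
        qed
        moreover have "lk (K - A) x = m - a" by (simp add: lookup_minus Ax m_def)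
        ultimately show "(d x ^^ lk (K - A) x) (Dl d xs (K - A) u) = (d x ^^ (m - a)) (Dl d xs (K' - A') u)"
          by simp
      qed
      have e2: "Dl d (x#xs) A v = (d x ^^ a) (V A')"
        unfolding Dl_Cons V_def
      proof -
        have "Dl d xs A v = Dl d xs A' v"
        proof (rule Dl_cong, intro ballI)
          fix i assume "i \<in> set xs"
          then have "i \<noteq> x" using xnot by auto
          then show "lk A i = lk A' i" by (simp add: Ai)
        qed
        then show "(d x ^^ lk A x) (Dl d xs A v) = (d x ^^ a) (Dl d xs A' v)"
          by (simp add: Ax)
      qed
      show "of_nat (c A') * (of_nat (m choose a) * (d x ^^ (m - a)) (U A') * (d x ^^ a) (V A')) = G (A' + Poly_Mapping.single x a)"
        unfolding G_def A_def[symmetric] p e1 e2 by (simp add: algebra_simps)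
    qed
    finally show "of_nat (c A') * (d x ^^ m) (U A' * V A') = (\<Sum>a\<le>m. G (A' + Poly_Mapping.single x a))" .
  qed
  also have "\<dots> = (\<Sum>A\<in>box K. G A)"
    by (rule box_split[OF hK K'x, symmetric])
  finally show ?case unfolding G_def .
qed

lemma leibniz_dpow:
  assumes der: "derivations n d" and K: "Poly_Mapping.keys K \<subseteq> {..<n}"
  shows "dpow n d K (u * v) = (\<Sum>A\<in>box K. of_nat (mbinom K A) * dpow n d (K - A) u * dpow n d A v)"
proof -
  have "dpow n d K (u * v) = (\<Sum>A\<in>box K. of_nat (\<Prod>i\<in>set [0..<n]. lk K i choose lk A i) * Dl d [0..<n] (K - A) u * Dl d [0..<n] A v)"
    unfolding dpow_Dl by (rule leibniz_list[OF der]) (use K in auto)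
  also have "\<dots> = (\<Sum>A\<in>box K. of_nat (mbinom K A) * dpow n d (K - A) u * dpow n d A v)"
    by (rule sum.cong[OF refl]) (use K in \<open>simp add: dpow_Dl mbinom_superset[of "{..<n}"] lessThan_atLeast0\<close>)
  finally show ?thesis .
qed


section \<open>Composition with a scalar in the middle\<close>

definition mc :: "nat \<Rightarrow> (nat \<Rightarrow> 'a::field \<Rightarrow> 'a) \<Rightarrow> mindex \<Rightarrow> 'a \<Rightarrow> mindex \<Rightarrow> 'a \<Rightarrow> 'a mpoly" where
  "mc n d J a M b = (\<Sum>I\<in>box J. Poly_Mapping.single (I + M) (a * of_nat (mbinom J I) * dpow n d (J - I) b))"

lemma op_comp_mc: "op_comp n d A B = (\<Sum>J\<in>Poly_Mapping.keys A. \<Sum>M\<in>Poly_Mapping.keys B. mc n d J (lk A J) M (lk B M))"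
  by (simp add: op_comp_def mc_def box_def)

lemma mc_zero_left[simp]: "mc n d J 0 M b = 0"
  by (simp add: mc_def)

lemma mc_zero_right: "derivations n d \<Longrightarrow> mc n d J a M 0 = 0"
  by (simp add: mc_def addf_zero[OF addf_dpow])

lemma op_comp_alt:
  assumes der: "derivations n d" and S: "finite S" "Poly_Mapping.keys A \<subseteq> S" and T: "finite T" "Poly_Mapping.keys B \<subseteq> T"
  shows "op_comp n d A B = (\<Sum>J\<in>S. \<Sum>M\<in>T. mc n d J (lk A J) M (lk B M))"
proof -
  have "op_comp n d A B = (\<Sum>J\<in>Poly_Mapping.keys A. \<Sum>M\<in>T. mc n d J (lk A J) M (lk B M))"
    unfolding op_comp_mc
  proof (rule sum.cong[OF refl])
    fix J show "(\<Sum>M\<in>Poly_Mapping.keys B. mc n d J (lk A J) M (lk B M)) = (\<Sum>M\<in>T. mc n d J (lk A J) M (lk B M))"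
      by (rule sum.mono_neutral_left[OF T]) (simp add: in_keys_iff mc_zero_right[OF der])
  qed
  also have "\<dots> = (\<Sum>J\<in>S. \<Sum>M\<in>T. mc n d J (lk A J) M (lk B M))"
    by (rule sum.mono_neutral_left[OF S]) (simp add: in_keys_iff)
  finally show ?thesis .
qed

lemma mc_add_left: "mc n d J (a + a') M b = mc n d J a M b + mc n d J a' M b"
  by (simp add: mc_def sum.distrib[symmetric] single_add[symmetric] distrib_right)

lemma scal_single: "scal c (Poly_Mapping.single k v) = Poly_Mapping.single k (c * v)"
  by (simp add: scal_def mult_single)

lemma mc_scal: "mc n d J (c * a) M b = scal c (mc n d J a M b)"
  by (simp add: mc_def scal_sum scal_single mult.assoc)

lemma op_comp_add_left:
  assumes der: "derivations n d"
  shows "op_comp n d (A + A') B = op_comp n d A B + op_comp n d A' B"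
proof -
  let ?S = "Poly_Mapping.keys A \<union> Poly_Mapping.keys A'"
  have "op_comp n d (A + A') B = (\<Sum>J\<in>?S. \<Sum>M\<in>Poly_Mapping.keys B. mc n d J (lk (A + A') J) M (lk B M))"
    by (rule op_comp_alt[OF der]) (use keys_add[of A A'] in auto)
  also have "\<dots> = (\<Sum>J\<in>?S. \<Sum>M\<in>Poly_Mapping.keys B. mc n d J (lk A J) M (lk B M))
     + (\<Sum>J\<in>?S. \<Sum>M\<in>Poly_Mapping.keys B. mc n d J (lk A' J) M (lk B M))"
    by (simp add: lookup_add mc_add_left sum.distrib)
  also have "\<dots> = op_comp n d A B + op_comp n d A' B"
    by (simp add: op_comp_alt[OF der, of ?S _ "Poly_Mapping.keys B"])
  finally show ?thesis .
qed

lemma op_comp_zero_left[simp]: "op_comp n d 0 B = 0"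
  by (simp add: op_comp_def)

lemma op_comp_sum_left:
  assumes der: "derivations n d"
  shows "op_comp n d (\<Sum>x\<in>X. g x) B = (\<Sum>x\<in>X. op_comp n d (g x) B)"
  by (induction X rule: infinite_finite_induct) (auto simp: op_comp_add_left[OF der])

lemma op_comp_single_left:
  assumes der: "derivations n d"
  shows "op_comp n d (Poly_Mapping.single I x) B = (\<Sum>M\<in>Poly_Mapping.keys B. mc n d I x M (lk B M))"
  by (subst op_comp_alt[OF der, of "{I}" _ "Poly_Mapping.keys B"]) auto

lemma op_comp_scal_left:
  assumes der: "derivations n d"
  shows "op_comp n d (scal c A) B = scal c (op_comp n d A B)"
proof -
  have "op_comp n d (scal c A) B = (\<Sum>J\<in>Poly_Mapping.keys A. \<Sum>M\<in>Poly_Mapping.keys B. mc n d J (lk (scal c A) J) M (lk B M))"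
    by (rule op_comp_alt[OF der]) (auto simp: keys_scal_sub)
  then show ?thesis by (simp add: mc_scal scal_sum op_comp_mc)
qed

lemma op_comp_right_const:
  assumes der: "derivations n d"
  shows "op_comp n d F (Poly_Mapping.single 0 c) =
    (\<Sum>J\<in>Poly_Mapping.keys F. \<Sum>I\<in>box J. Poly_Mapping.single I (lk F J * of_nat (mbinom J I) * dpow n d (J - I) c))"
  by (subst op_comp_alt[OF der, of "Poly_Mapping.keys F" _ "{0}"]) (auto simp: mc_def)

lemma single_sum: "Poly_Mapping.single k (sum f A) = (\<Sum>x\<in>A. Poly_Mapping.single k (f x))"
  by (induction A rule: infinite_finite_induct) (auto simp: single_add)

lemma mbinom_mult:
  assumes I: "I \<in> box J" and I': "I' \<in> box I"
  shows "mbinom J I * mbinom I I' = mbinom J I' * mbinom (J - I') (I - I')"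
proof -
  let ?S = "Poly_Mapping.keys J"
  have I'J: "I' \<in> box J" using I I' by (auto simp: mem_box intro: order_trans)
  have b4: "I - I' \<in> box (J - I')" using I by (auto simp: mem_box lookup_minus intro: diff_le_mono)
  have kI: "Poly_Mapping.keys I \<subseteq> ?S" using box_keys[OF I] .
  have kJ': "Poly_Mapping.keys (J - I') \<subseteq> ?S" by (auto simp: in_keys_iff lookup_minus)
  have "mbinom J I * mbinom I I' = (\<Prod>i\<in>?S. (lk J i choose lk I i) * (lk I i choose lk I' i))"
    by (simp add: mbinom_superset[OF _ _ I] mbinom_superset[OF _ kI I'] prod.distrib)
  also have "\<dots> = (\<Prod>i\<in>?S. (lk J i choose lk I' i) * ((lk J i - lk I' i) choose (lk I i - lk I' i)))"
    by (rule prod.cong[OF refl], rule choose_mult) (use I I' in \<open>auto simp: mem_box\<close>)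
  also have "\<dots> = mbinom J I' * mbinom (J - I') (I - I')"
  proof -
    have m1: "mbinom J I' = (\<Prod>i\<in>?S. lk J i choose lk I' i)"
      by (rule mbinom_superset[OF _ _ I'J]) auto
    have m2: "mbinom (J - I') (I - I') = (\<Prod>i\<in>?S. (lk J i - lk I' i) choose (lk I i - lk I' i))"
      by (subst mbinom_superset[OF _ kJ' b4]) (auto simp: lookup_minus)
    show ?thesis by (simp only: m1 m2 prod.distrib)
  qed
  finally show ?thesis .
qed

lemma rearr:
  fixes a b a' b' f x y :: "'a::comm_ring_1"
  assumes H: "a * b = a' * b'"
  shows "f * a' * (b' * x * y) = f * a * x * b * y"
proof -
  have "f * a * x * b * y = (a * b) * (f * x * y)" by (simp add: ac_simps)
  also have "\<dots> = (a' * b') * (f * x * y)" by (simp add: H)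
  also have "\<dots> = f * a' * (b' * x * y)" by (simp add: ac_simps)
  finally show ?thesis by simp
qed

lemma key_monomial:
  assumes der: "derivations n d" and J: "Poly_Mapping.keys J \<subseteq> {..<n}"
  shows "(\<Sum>I\<in>box J. mc n d I (f * of_nat (mbinom J I) * dpow n d (J - I) c) M z) = mc n d J f M (c * z)"
proof -
  define h where "h = (\<lambda>(I', A). Poly_Mapping.single (I' + M)
     (f * of_nat (mbinom J I') * (of_nat (mbinom (J - I') A) * dpow n d (J - I' - A) c * dpow n d A z)))"
  have "(\<Sum>I\<in>box J. mc n d I (f * of_nat (mbinom J I) * dpow n d (J - I) c) M z)
      = (\<Sum>I\<in>box J. \<Sum>I'\<in>box I. Poly_Mapping.single (I' + M)
          (f * of_nat (mbinom J I) * dpow n d (J - I) c * of_nat (mbinom I I') * dpow n d (I - I') z))"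
    by (simp add: mc_def)
  also have "\<dots> = (\<Sum>p\<in>Sigma (box J) box. Poly_Mapping.single (snd p + M)
          (f * of_nat (mbinom J (fst p)) * dpow n d (J - fst p) c * of_nat (mbinom (fst p) (snd p)) * dpow n d (fst p - snd p) z))"
    by (simp add: sum.Sigma finite_box split_beta)
  also have "\<dots> = (\<Sum>q\<in>Sigma (box J) (\<lambda>I'. box (J - I')). h q)"
  proof (rule sum.reindex_bij_witness[where i = "\<lambda>q. (fst q + snd q, fst q)" and j = "\<lambda>p. (snd p, fst p - snd p)"])
    fix p assume p: "p \<in> Sigma (box J) box"
    then have a: "\<forall>i. lk (snd p) i \<le> lk (fst p) i" "\<forall>i. lk (fst p) i \<le> lk J i" by (auto simp: mem_box)
    show "(fst (snd p, fst p - snd p) + snd (snd p, fst p - snd p), fst (snd p, fst p - snd p)) = p"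
      using a by (auto intro!: poly_mapping_eqI simp: lookup_add lookup_minus prod_eq_iff)
    show "(snd p, fst p - snd p) \<in> Sigma (box J) (\<lambda>I'. box (J - I'))"
      using a by (auto simp: mem_box lookup_minus intro: order_trans diff_le_mono)
    have e1: "J - snd p - (fst p - snd p) = J - fst p"
      using a by (auto intro!: poly_mapping_eqI simp: lookup_minus)
    have e2: "of_nat (mbinom J (fst p)) * of_nat (mbinom (fst p) (snd p)) =
        (of_nat (mbinom J (snd p) * mbinom (J - snd p) (fst p - snd p)) :: 'a)"
      using mbinom_mult[of "fst p" J "snd p"] p by (auto simp del: of_nat_mult simp: of_nat_mult[symmetric])
    show "h (snd p, fst p - snd p) = Poly_Mapping.single (snd p + M)
          (f * of_nat (mbinom J (fst p)) * dpow n d (J - fst p) c * of_nat (mbinom (fst p) (snd p)) * dpow n d (fst p - snd p) z)"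
      unfolding h_def split e1 rearr[OF e2[unfolded of_nat_mult]] ..
  next
    fix q assume q: "q \<in> Sigma (box J) (\<lambda>I'. box (J - I'))"
    then have a: "\<forall>i. lk (fst q) i \<le> lk J i" "\<forall>i. lk (snd q) i \<le> lk J i - lk (fst q) i"
      by (auto simp: mem_box lookup_minus)
    show "(snd (fst q + snd q, fst q), fst (fst q + snd q, fst q) - snd (fst q + snd q, fst q)) = q"
      by (auto intro!: poly_mapping_eqI simp: lookup_add lookup_minus prod_eq_iff)
    show "(fst q + snd q, fst q) \<in> Sigma (box J) box"
      using a by (auto simp: mem_box lookup_add) (metis add.commute le_diff_conv2)
  qed
  also have "\<dots> = (\<Sum>I'\<in>box J. \<Sum>A\<in>box (J - I'). h (I', A))"
    by (simp add: sum.Sigma finite_box)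
  also have "\<dots> = (\<Sum>I'\<in>box J. Poly_Mapping.single (I' + M) (f * of_nat (mbinom J I') * dpow n d (J - I') (c * z)))"
  proof (rule sum.cong[OF refl])
    fix I' assume "I' \<in> box J"
    have "Poly_Mapping.keys (J - I') \<subseteq> Poly_Mapping.keys J" by (auto simp: in_keys_iff lookup_minus)
    then have kk: "Poly_Mapping.keys (J - I') \<subseteq> {..<n}" using J by blast
    show "(\<Sum>A\<in>box (J - I'). h (I', A)) = Poly_Mapping.single (I' + M) (f * of_nat (mbinom J I') * dpow n d (J - I') (c * z))"
      unfolding h_def leibniz_dpow[OF der kk] by (simp add: single_sum sum_distrib_left)
  qed
  also have "\<dots> = mc n d J f M (c * z)" by (simp add: mc_def)
  finally show ?thesis .
qed

lemma assoc_const: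
  assumes der: "derivations n d" and F: "in_vars n F"
  shows "op_comp n d (op_comp n d F (Poly_Mapping.single 0 c)) Z = op_comp n d F (scal c Z)"
proof -
  have "op_comp n d (op_comp n d F (Poly_Mapping.single 0 c)) Z
     = (\<Sum>J\<in>Poly_Mapping.keys F. \<Sum>I\<in>box J. \<Sum>M\<in>Poly_Mapping.keys Z.
          mc n d I (lk F J * of_nat (mbinom J I) * dpow n d (J - I) c) M (lk Z M))"
    by (simp add: op_comp_right_const[OF der] op_comp_sum_left[OF der] op_comp_single_left[OF der])
  also have "\<dots> = (\<Sum>J\<in>Poly_Mapping.keys F. \<Sum>M\<in>Poly_Mapping.keys Z. mc n d J (lk F J) M (c * lk Z M))"
  proof (rule sum.cong[OF refl])
    fix J assume "J \<in> Poly_Mapping.keys F"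
    then have J: "Poly_Mapping.keys J \<subseteq> {..<n}" using F by (auto simp: in_vars_def)
    show "(\<Sum>I\<in>box J. \<Sum>M\<in>Poly_Mapping.keys Z. mc n d I (lk F J * of_nat (mbinom J I) * dpow n d (J - I) c) M (lk Z M))
       = (\<Sum>M\<in>Poly_Mapping.keys Z. mc n d J (lk F J) M (c * lk Z M))"
      by (subst sum.swap) (simp add: key_monomial[OF der J])
  qed
  also have "\<dots> = op_comp n d F (scal c Z)"
  proof -
    have "op_comp n d F (scal c Z) = (\<Sum>J\<in>Poly_Mapping.keys F. \<Sum>M\<in>Poly_Mapping.keys Z. mc n d J (lk F J) M (lk (scal c Z) M))"
      by (rule op_comp_alt[OF der]) (auto simp: keys_scal_sub)
    then show ?thesis by simp
  qed
  finally show ?thesis .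
qed


section \<open>Symbols\<close>

lemma lookup_Sym: "lk (Sym L) Q = (if int (mdeg Q) = ord L then lk L Q else 0)"
proof -
  have "lk (Sym L) Q = (\<Sum>J\<in>{J \<in> Poly_Mapping.keys L. int (mdeg J) = ord L}. if J = Q then lk L J else 0)"
    by (simp add: Sym_def lookup_sum lookup_single when_def eq_commute)
  also have "\<dots> = (if Q \<in> {J \<in> Poly_Mapping.keys L. int (mdeg J) = ord L} then lk L Q else 0)"
    by (rule sum.delta) simp
  also have "\<dots> = (if int (mdeg Q) = ord L then lk L Q else 0)"
    by (auto simp: in_keys_iff)
  finally show ?thesis .
qed

lemma ord_keys: "Poly_Mapping.keys A = Poly_Mapping.keys B \<Longrightarrow> ord A = ord B"
  unfolding ord_def by (metis keys_eq_empty)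

lemma Sym_scal: "(c::'a::field) \<noteq> 0 \<Longrightarrow> Sym (scal c X) = scal c (Sym X)"
  by (rule poly_mapping_eqI) (simp add: lookup_Sym ord_keys[OF keys_scal])

lemma ord_max:
  assumes "L \<noteq> 0"
  shows "\<exists>Q\<in>Poly_Mapping.keys L. int (mdeg Q) = ord L \<and> (\<forall>Q'\<in>Poly_Mapping.keys L. mdeg Q' \<le> mdeg Q)"
proof -
  have ne: "Poly_Mapping.keys L \<noteq> {}" using assms by simp
  have "Max (mdeg ` Poly_Mapping.keys L) \<in> mdeg ` Poly_Mapping.keys L" using ne by (intro Max_in) auto
  then obtain Q where Q: "Q \<in> Poly_Mapping.keys L" "mdeg Q = Max (mdeg ` Poly_Mapping.keys L)" by auto
  have "\<forall>Q'\<in>Poly_Mapping.keys L. mdeg Q' \<le> mdeg Q" using Q(2) by simp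
  then show ?thesis using Q assms by (auto simp: ord_def)
qed

lemma ord_eqI:
  assumes "Q0 \<in> Poly_Mapping.keys L" "\<forall>Q\<in>Poly_Mapping.keys L. mdeg Q \<le> mdeg Q0"
  shows "ord L = int (mdeg Q0)"
proof -
  have "L \<noteq> 0" using assms(1) by auto
  moreover have "Max (mdeg ` Poly_Mapping.keys L) = mdeg Q0"
    using assms by (intro Max_eqI) auto
  ultimately show ?thesis by (simp add: ord_def)
qed

lemma Sym_zero[simp]: "Sym 0 = 0"
  by (simp add: Sym_def)

lemma diff_self_mindex[simp]: "(J::mindex) - J = 0"
  by (rule poly_mapping_eqI) (simp add: lookup_minus)

lemma lookup_op_comp_const:
  assumes der: "derivations n d"
  shows "lk (op_comp n d F (Poly_Mapping.single 0 c)) Q =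
     (\<Sum>J\<in>Poly_Mapping.keys F. if Q \<in> box J then lk F J * of_nat (mbinom J Q) * dpow n d (J - Q) c else 0)"
proof -
  have "lk (op_comp n d F (Poly_Mapping.single 0 c)) Q =
     (\<Sum>J\<in>Poly_Mapping.keys F. \<Sum>I\<in>box J. if I = Q then lk F J * of_nat (mbinom J I) * dpow n d (J - I) c else 0)"
    by (simp add: op_comp_right_const[OF der] lookup_sum lookup_single when_def)
  also have "\<dots> = (\<Sum>J\<in>Poly_Mapping.keys F. if Q \<in> box J then lk F J * of_nat (mbinom J Q) * dpow n d (J - Q) c else 0)"
    by (rule sum.cong[OF refl]) (simp add: sum.delta finite_box)
  finally show ?thesis .
qed

lemma Sym_op_comp_const:
  assumes der: "derivations n d" and c: "c \<noteq> 0"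
  shows "Sym (op_comp n d F (Poly_Mapping.single 0 c)) = scal c (Sym F)"
proof (cases "F = 0")
  case True then show ?thesis by simp
next
  case False
  define P where "P = op_comp n d F (Poly_Mapping.single 0 c)"
  obtain J0 where J0: "J0 \<in> Poly_Mapping.keys F" "int (mdeg J0) = ord F"
    and mx: "\<forall>Q'\<in>Poly_Mapping.keys F. mdeg Q' \<le> mdeg J0"
    using ord_max[OF False] by blast
  have high: "lk P Q = c * lk F Q" if hq: "mdeg J0 \<le> mdeg Q" for Q
  proof -
    have "lk P Q = (\<Sum>J\<in>Poly_Mapping.keys F. if J = Q then lk F J * c else 0)"
      unfolding P_def lookup_op_comp_const[OF der]
    proof (rule sum.cong[OF refl])
      fix J assume J: "J \<in> Poly_Mapping.keys F"
      show "(if Q \<in> box J then lk F J * of_nat (mbinom J Q) * dpow n d (J - Q) c else 0) = (if J = Q then lk F J * c else 0)"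
      proof (cases "Q \<in> box J")
        case True
        have "mdeg Q \<le> mdeg J" using mdeg_mono[OF True] .
        moreover have "mdeg J \<le> mdeg J0" using mx J by blast
        ultimately have "Q = J" using hq mdeg_eq_box[OF True] by simp
        then show ?thesis by (simp add: dpow_zero_mindex)
      next
        case False then show ?thesis by auto
      qed
    qed
    also have "\<dots> = c * lk F Q" by (simp add: sum.delta in_keys_iff)
    finally show ?thesis .
  qed
  have ordP: "ord P = int (mdeg J0)"
  proof (rule ord_eqI)
    show "J0 \<in> Poly_Mapping.keys P" using J0(1) c high[of J0] by (simp add: in_keys_iff)
    show "\<forall>Q\<in>Poly_Mapping.keys P. mdeg Q \<le> mdeg J0"
    proof
      fix Q assume Q: "Q \<in> Poly_Mapping.keys P"
      show "mdeg Q \<le> mdeg J0"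
      proof (rule ccontr)
        assume "\<not> mdeg Q \<le> mdeg J0"
        then have "lk P Q = c * lk F Q" "lk F Q = 0" using high mx by (auto simp: in_keys_iff)
        then show False using Q by (simp add: in_keys_iff)
      qed
    qed
  qed
  show ?thesis unfolding P_def[symmetric]
    by (rule poly_mapping_eqI) (auto simp: lookup_Sym ordP J0(2)[symmetric] high)
qed

lemma in_vars_op_comp_const:
  assumes F: "in_vars n F" and der: "derivations n d"
  shows "in_vars n (op_comp n d F (Poly_Mapping.single 0 c))"
proof -
  have "Poly_Mapping.keys (op_comp n d F (Poly_Mapping.single 0 c)) \<subseteq> (\<Union>J\<in>Poly_Mapping.keys F. box J)"
  proof -
    have "Poly_Mapping.keys (op_comp n d F (Poly_Mapping.single 0 c)) \<subseteq>
        (\<Union>J\<in>Poly_Mapping.keys F. Poly_Mapping.keys (\<Sum>I\<in>box J. Poly_Mapping.single I (lk F J * of_nat (mbinom J I) * dpow n d (J - I) c)))"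
      unfolding op_comp_right_const[OF der] by (rule keys_sum)
    also have "\<dots> \<subseteq> (\<Union>J\<in>Poly_Mapping.keys F. box J)"
    proof (rule UN_mono[OF subset_refl])
      fix J
      have "Poly_Mapping.keys (\<Sum>I\<in>box J. Poly_Mapping.single I (lk F J * of_nat (mbinom J I) * dpow n d (J - I) c))
          \<subseteq> (\<Union>I\<in>box J. Poly_Mapping.keys (Poly_Mapping.single I (lk F J * of_nat (mbinom J I) * dpow n d (J - I) c)))"
        by (rule keys_sum)
      also have "\<dots> \<subseteq> box J" by auto
      finally show "Poly_Mapping.keys (\<Sum>I\<in>box J. Poly_Mapping.single I (lk F J * of_nat (mbinom J I) * dpow n d (J - I) c)) \<subseteq> box J" .
    qed
    finally show ?thesis .
  qed
  then show ?thesis using F box_keys unfolding in_vars_def by blast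
qed


section \<open>Rescaling factorizations\<close>

fun gfac :: "nat \<Rightarrow> (nat \<Rightarrow> 'a::field \<Rightarrow> 'a) \<Rightarrow> 'a \<Rightarrow> 'a list \<Rightarrow> 'a mpoly list \<Rightarrow> 'a mpoly list" where
  "gfac n d c0 (b#bs) (F#Fs) = scal (inverse c0) (op_comp n d F (Poly_Mapping.single 0 (c0 * b))) # gfac n d (c0 * b) bs Fs"
| "gfac n d c0 _ _ = []"

lemma op_comp_list_Cons: "op_comp_list n d (F # Fs) = op_comp n d F (op_comp_list n d Fs)"
  by (simp add: op_comp_list_def)

lemma gfac_len: "length bs = length Fs \<Longrightarrow> length (gfac n d c0 bs Fs) = length Fs"
  by (induction bs Fs arbitrary: c0 rule: list_induct2) auto

lemma gfac_comp:
  assumes der: "derivations n d"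
  shows "length bs = length Fs \<Longrightarrow> \<forall>F\<in>set Fs. in_vars n F \<Longrightarrow> c0 \<noteq> 0 \<Longrightarrow> 0 \<notin> set bs \<Longrightarrow> c0 * prod_list bs = 1 \<Longrightarrow>
    op_comp_list n d (gfac n d c0 bs Fs) = scal (inverse c0) (op_comp_list n d Fs)"
proof (induction bs Fs arbitrary: c0 rule: list_induct2)
  case Nil
  then have "c0 = 1" by simp
  then show ?case by (simp add: op_comp_list_def)
next
  case (Cons b bs F Fs)
  have nz: "c0 * b \<noteq> 0" using Cons.prems by auto
  let ?Y = "op_comp_list n d Fs"
  have IH: "op_comp_list n d (gfac n d (c0 * b) bs Fs) = scal (inverse (c0 * b)) ?Y"
    using Cons.prems nz by (intro Cons.IH) (auto simp: mult.assoc)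
  have "op_comp_list n d (gfac n d c0 (b # bs) (F # Fs))
      = op_comp n d (scal (inverse c0) (op_comp n d F (Poly_Mapping.single 0 (c0 * b)))) (scal (inverse (c0 * b)) ?Y)"
    by (simp add: op_comp_list_Cons IH)
  also have "\<dots> = scal (inverse c0) (op_comp n d F (scal (c0 * b) (scal (inverse (c0 * b)) ?Y)))"
    using Cons.prems by (simp add: op_comp_scal_left[OF der] assoc_const[OF der])
  also have "\<dots> = scal (inverse c0) (op_comp_list n d (F # Fs))"
  proof -
    have e: "scal (c0 * b) (scal (inverse (c0 * b)) ?Y) = ?Y"
      by (simp only: scal_scal right_inverse[OF nz] scal_one)
    show ?thesis by (simp only: e op_comp_list_Cons)
  qed
  finally show ?case .
qed

lemma gfac_props:
  assumes der: "derivations n d"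
  shows "length bs = length Fs \<Longrightarrow> \<forall>F\<in>set Fs. in_vars n F \<Longrightarrow> c0 \<noteq> 0 \<Longrightarrow> 0 \<notin> set bs \<Longrightarrow>
    \<forall>i<length Fs. in_vars n (gfac n d c0 bs Fs ! i) \<and> Sym (gfac n d c0 bs Fs ! i) = scal (bs ! i) (Sym (Fs ! i))"
proof (induction bs Fs arbitrary: c0 rule: list_induct2)
  case Nil then show ?case by simp
next
  case (Cons b bs F Fs)
  have nz: "c0 * b \<noteq> 0" using Cons.prems by auto
  have IH: "\<forall>i<length Fs. in_vars n (gfac n d (c0 * b) bs Fs ! i) \<and> Sym (gfac n d (c0 * b) bs Fs ! i) = scal (bs ! i) (Sym (Fs ! i))"
    using Cons.prems nz by (intro Cons.IH) auto
  have h0: "in_vars n (scal (inverse c0) (op_comp n d F (Poly_Mapping.single 0 (c0 * b))))"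
    using Cons.prems by (intro in_vars_scal in_vars_op_comp_const[OF _ der]) auto
  have s0: "Sym (scal (inverse c0) (op_comp n d F (Poly_Mapping.single 0 (c0 * b)))) = scal b (Sym F)"
  proof -
    have e: "inverse c0 * (c0 * b) = b" using Cons.prems by (simp add: field_simps)
    show ?thesis using Cons.prems nz by (simp add: Sym_scal Sym_op_comp_const[OF der] e)
  qed
  show ?case
  proof (intro allI impI)
    fix i assume i: "i < length (F # Fs)"
    show "in_vars n (gfac n d c0 (b # bs) (F # Fs) ! i) \<and>
        Sym (gfac n d c0 (b # bs) (F # Fs) ! i) = scal ((b # bs) ! i) (Sym ((F # Fs) ! i))"
    proof (cases i)
      case 0 then show ?thesis using h0 s0 by simp
    next
      case (Suc j) then show ?thesis using IH i by simp
    qed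
  qed
qed

lemma has_factorization_scale:
  assumes der: "derivations n d" and len: "length b = length S" and pb: "prod_list b = 1"
    and hf: "has_factorization n d M S"
  shows "has_factorization n d M (map2 scal b S)"
proof -
  obtain Fs where Fs: "length Fs = length S" "\<forall>i<length S. in_vars n (Fs ! i) \<and> Sym (Fs ! i) = S ! i"
    "M = op_comp_list n d Fs"
    using hf unfolding has_factorization_def by blast
  have b0: "0 \<notin> set b" using pb prod_list_nonzero by blast
  have iv: "\<forall>F\<in>set Fs. in_vars n F" using Fs by (metis in_set_conv_nth)
  have lb: "length b = length Fs" using len Fs by simp
  define Gs where "Gs = gfac n d 1 b Fs"
  have "length Gs = length (map2 scal b S)" using gfac_len[OF lb] Fs len by (simp add: Gs_def)
  moreover have "\<forall>i<length (map2 scal b S). in_vars n (Gs ! i) \<and> Sym (Gs ! i) = map2 scal b S ! i"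
    using gfac_props[OF der lb iv _ b0, of 1] Fs len by (simp add: Gs_def)
  moreover have "M = op_comp_list n d Gs"
    using gfac_comp[OF der lb iv _ b0, of 1] pb Fs by (simp add: Gs_def)
  ultimately show ?thesis unfolding has_factorization_def by blast
qed

lemma prod_list_inverse: "prod_list (map inverse b) = inverse (prod_list (b::'a::field list))"
  by (induction b) (auto simp: inverse_mult_distrib)

lemma has_factorization_scale_iff:
  assumes der: "derivations n d" and len: "length b = length S" and pb: "prod_list b = 1"
  shows "has_factorization n d M (map2 scal b S) \<longleftrightarrow> has_factorization n d M S"
proof
  assume "has_factorization n d M S" then show "has_factorization n d M (map2 scal b S)"
    by (rule has_factorization_scale[OF der len pb])
next
  assume h: "has_factorization n d M (map2 scal b S)"
  have b0: "0 \<notin> set b" using pb prod_list_nonzero by blast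
  have e: "map2 scal (map inverse b) (map2 scal b S) = S"
  proof (rule nth_equalityI)
    show "length (map2 scal (map inverse b) (map2 scal b S)) = length S" using len by simp
    fix i assume "i < length (map2 scal (map inverse b) (map2 scal b S))"
    then have i: "i < length b" "i < length S" using len by auto
    then have "b ! i \<noteq> 0" using b0 nth_mem by metis
    then show "map2 scal (map inverse b) (map2 scal b S) ! i = S ! i" using i by simp
  qed
  have "has_factorization n d M (map2 scal (map inverse b) (map2 scal b S))"
    by (rule has_factorization_scale[OF der _ _ h]) (use len pb in \<open>auto simp: prod_list_inverse\<close>)
  then show "has_factorization n d M S" unfolding e .
qed

theorem mainTheorem7:
  fixes n :: nat and d :: "nat \<Rightarrow> 'a::field \<Rightarrow> 'a"
    and L :: "'a mpoly" and S :: "'a mpoly list" and b :: "'a list"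
  assumes "derivations n d"
    and "in_vars n L"
    and "\<forall>i<length S. in_vars n (S ! i) \<and> homogeneous (S ! i)"
    and "length b = length S"
    and "prod_list b = 1"
    and "Sym L = prod_list S"
  shows "obstacle_ideal n S = obstacle_ideal n (map2 scal b S)
    \<and> obstacle_classes n d L S = obstacle_classes n d L (map2 scal b S)"
proof
  show I: "obstacle_ideal n S = obstacle_ideal n (map2 scal b S)"
    by (rule obstacle_ideal_scale[OF assms(4,5)])
  have hf: "\<And>M. has_factorization n d M (map2 scal b S) \<longleftrightarrow> has_factorization n d M S"
    by (rule has_factorization_scale_iff[OF assms(1,4,5)])
  show "obstacle_classes n d L S = obstacle_classes n d L (map2 scal b S)"
    unfolding obstacle_classes_def common_obstacle_def hf I ..
qed

end
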